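(* Let $d=2q\ge 4$ be fixed and let $Y$ be the number of Hamilton cycles obeying the traffic rules in the random bipartite multigraph $B^*(n,q)$ defined below. Then $$\mathbb{E}(Y)=\Theta\!\left(\left(\frac{(d-1)(d-2)^{d-2}}{d^{d-2}}\right)^{n}\right)$$ as $n\to\infty$. Hence $\mathbb{E}(Y)\to 0$ for $d\le 6$ and $\mathbb{E}(Y)\to\infty$ for $d\ge 8$.
   Context: $B^*(n,q)$: there are $n$ plain and $n$ coloured vertices, each with $d=2q$ half-edges; at each coloured vertex the half-edges are partitioned into $q$ designated pairs. A uniformly random bijection between the $dn$ plain half-edges and the $dn$ coloured half-edges is chosen, each matched pair being an edge. A Hamilton cycle (a cyclic sequence through all $2n$ vertices alternately plain and coloured, specified by the half-edges/edges of the configuration it uses) obeys the traffic rules if at each coloured vertex the two half-edges it uses form a designated pair. $Y$ counts such cycles (equivalently, rainbow Hamilton cycles in the randomly coloured configuration-model $2q$-regular multigraph with $n$ colours, $q$ edges per colour). *)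

theory Defs
  imports "HOL-Analysis.Analysis" "HOL-Library.FuncSet" "HOL-Library.Landau_Symbols"
begin

text \<open>Plain half-edges are pairs (v,i) with v < n, i < d
  (half-edge i at plain vertex v); coloured half-edges are pairs (w,j) with w < n, j < d.
  At each coloured vertex the designated pairs are {2k, 2k+1}, k < q.\<close>

definition half_edges :: "nat \<Rightarrow> nat \<Rightarrow> (nat \<times> nat) set" where
  "half_edges n q = {..<n} \<times> {..<2*q}"

text \<open>All configurations: bijections plain half-edges -> coloured half-edges
  (extensional outside the plain half-edges, so that they are counted once each).\<close>
definition configurations :: "nat \<Rightarrow> nat \<Rightarrow> ((nat \<times> nat) \<Rightarrow> (nat \<times> nat)) set" where
  "configurations n q =
     {\<sigma> \<in> half_edges n q \<rightarrow>\<^sub>E half_edges n q. bij_betw \<sigma> (half_edges n q) (half_edges n q)}"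

definition designated_pair :: "nat \<Rightarrow> nat \<Rightarrow> bool" where
  "designated_pair j j' \<longleftrightarrow> j \<noteq> j' \<and> j div 2 = j' div 2"

text \<open>A Hamilton cycle obeying the traffic rules, given as the set H of plain half-edges
  (each identifying one edge of the configuration) that it uses. The cycle is
  p 0, c 0, p 1, c 1, ..., p (n-1), c (n-1), p 0; the edge p i -- c i uses plain half-edge
  a i (at p i), the edge c i -- p ((i+1) mod n) uses plain half-edge b i (at p ((i+1) mod n)).\<close>
definition traffic_ham_cycle :: "nat \<Rightarrow> nat \<Rightarrow> ((nat \<times> nat) \<Rightarrow> (nat \<times> nat)) \<Rightarrow> (nat \<times> nat) set \<Rightarrow> bool" where
  "traffic_ham_cycle n q \<sigma> H \<longleftrightarrow>
     (\<exists>(p :: nat \<Rightarrow> nat) (c :: nat \<Rightarrow> nat) (a :: nat \<Rightarrow> nat \<times> nat) (b :: nat \<Rightarrow> nat \<times> nat).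
        bij_betw p {..<n} {..<n} \<and> bij_betw c {..<n} {..<n} \<and>
        (\<forall>i<n. a i \<in> half_edges n q \<and> fst (a i) = p i \<and>
               b i \<in> half_edges n q \<and> fst (b i) = p ((i + 1) mod n) \<and>
               fst (\<sigma> (a i)) = c i \<and> fst (\<sigma> (b i)) = c i \<and>
               designated_pair (snd (\<sigma> (a i))) (snd (\<sigma> (b i))) \<and>
               a ((i + 1) mod n) \<noteq> b i) \<and>
        H = a ` {..<n} \<union> b ` {..<n})"

definition Y :: "nat \<Rightarrow> nat \<Rightarrow> ((nat \<times> nat) \<Rightarrow> (nat \<times> nat)) \<Rightarrow> nat" where
  "Y n q \<sigma> = card {H. traffic_ham_cycle n q \<sigma> H}"

definition EY :: "nat \<Rightarrow> nat \<Rightarrow> real" where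
  "EY n q = (\<Sum>\<sigma>\<in>configurations n q. real (Y n q \<sigma>)) / real (card (configurations n q))"

end

theory Submission
  imports Defs
begin

lemma ln_lower_aux:
  fixes x :: real assumes "0 \<le> x"
  shows "2*x/(2+x) \<le> ln (1+x)"
proof -
  let ?f = "\<lambda>t::real. ln (1+t) - 2*t/(2+t)"
  have "?f 0 \<le> ?f x"
  proof (rule DERIV_nonneg_imp_increasing_open[OF assms])
    fix t :: real assume t: "0 < t" "t < x"
    have "(?f has_real_derivative (1/(1+t) - (2*(2+t) - 2*t)/(2+t)^2)) (at t)"
      using t by (auto intro!: derivative_eq_intros simp: power2_eq_square)
    moreover have "1/(1+t) - (2*(2+t) - 2*t)/(2+t)^2 = t^2/((1+t)*(2+t)^2)"
      using t by (simp add: divide_simps power2_eq_square) (simp add: algebra_simps)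
    moreover have "t^2/((1+t)*(2+t)^2) \<ge> 0" using t by simp
    ultimately show "\<exists>y. DERIV ?f t :> y \<and> 0 \<le> y" by metis
  next
    show "continuous_on {0..x} ?f"
      by (intro continuous_intros) auto
  qed
  then show ?thesis by simp
qed

lemma ln_upper_aux:
  fixes x :: real assumes "0 \<le> x"
  shows "ln (1+x) \<le> x - x^2/2 + x^3/3"
proof -
  let ?f = "\<lambda>t::real. t - t^2/2 + t^3/3 - ln (1+t)"
  have "?f 0 \<le> ?f x"
  proof (rule DERIV_nonneg_imp_increasing_open[OF assms])
    fix t :: real assume t: "0 < t" "t < x"
    have "(?f has_real_derivative (1 - t + t^2 - 1/(1+t))) (at t)"
      using t by (auto intro!: derivative_eq_intros simp: power2_eq_square)
    moreover have "1 - t + t^2 - 1/(1+t) = t^3/(1+t)"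
      using t by (simp add: field_simps power2_eq_square power3_eq_cube)
    moreover have "t^3/(1+t) \<ge> 0" using t by simp
    ultimately show "\<exists>y. DERIV ?f t :> y \<and> 0 \<le> y" by metis
  next
    show "continuous_on {0..x} ?f"
      by (intro continuous_intros) auto
  qed
  then show ?thesis by simp
qed

definition sti :: "nat \<Rightarrow> real" where
  "sti m = ln (fact m) + real m - (real m + 1/2) * ln (real m)"

lemma sti_step:
  assumes "m \<ge> 1"
  shows "sti m - sti (Suc m) = (real m + 1/2) * ln (1 + 1/real m) - 1"
proof -
  have m: "real m > 0" using assms by simp
  have A: "ln (fact (Suc m) :: real) = ln (real (Suc m)) + ln (fact m)"
    by (simp add: ln_mult del: of_nat_Suc)
  have B: "ln (1 + 1/real m) = ln (real m + 1) - ln (real m)"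
  proof -
    have "1 + 1/real m = (real m + 1)/real m" using m by (simp add: field_simps)
    then show ?thesis using m by (simp add: ln_div)
  qed
  have S: "sti (Suc m) = ln (real (Suc m)) + ln (fact m) + real (Suc m) - (real (Suc m) + 1/2) * ln (real (Suc m))"
    by (simp only: sti_def A)
  show ?thesis unfolding B S by (simp add: sti_def algebra_simps)
qed

lemma sti_dec:
  assumes "m \<ge> 1"
  shows "sti (Suc m) \<le> sti m"
proof -
  have m: "real m > 0" using assms by simp
  have "2*(1/real m)/(2+1/real m) \<le> ln (1 + 1/real m)"
    by (rule ln_lower_aux) simp
  moreover have "2*(1/real m)/(2+1/real m) = 1/(real m + 1/2)"
    using m by (simp add: field_simps)
  ultimately have "1 \<le> (real m + 1/2) * ln (1 + 1/real m)"
    using m by (simp add: field_simps)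
  then show ?thesis using sti_step[OF assms] by simp
qed

lemma sti_inc:
  assumes "m \<ge> 1"
  shows "sti m - 1/(2*real m) \<le> sti (Suc m) - 1/(2*real (Suc m))"
proof -
  have m: "real m \<ge> 1" using assms by simp
  let ?x = "1/real m"
  have "ln (1 + ?x) \<le> ?x - ?x^2/2 + ?x^3/3"
    by (rule ln_upper_aux) simp
  then have "(real m + 1/2) * ln (1 + ?x) \<le> (real m + 1/2) * (?x - ?x^2/2 + ?x^3/3)"
    using m by (intro mult_left_mono) auto
  also have "\<dots> = 1 + 1/(12*real m^2) + 1/(6 * real m^3)"
    using m by (simp add: field_simps power2_eq_square power3_eq_cube)
  finally have A: "sti m - sti (Suc m) \<le> 1/(12*real m^2) + 1/(6 * real m^3)"
    using sti_step[OF assms] by simp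
  have B: "1/(12*real m^2) + 1/(6 * real m^3) \<le> 1/(2*real m) - 1/(2*(real m + 1))"
  proof -
    have "1/(6 * real m^3) \<le> 1/(6*real m^2)"
      using m by (simp add: field_simps power2_eq_square power3_eq_cube)
    moreover have "1/(12*real m^2) + 1/(6*real m^2) \<le> 1/(2*real m) - 1/(2*(real m + 1))"
    proof -
      have e1: "1/(12*real m^2) + 1/(6*real m^2) = 1/(4*real m^2)" using m by (simp add: field_simps)
      have e2: "1/(2*real m) - 1/(2*(real m + 1)) = 1/(2*real m*(real m + 1))" using m by (simp add: field_simps)
      have "2*real m*(real m + 1) \<le> 4*real m^2" using m by (simp add: power2_eq_square algebra_simps)
      then have "1/(4*real m^2) \<le> 1/(2*real m*(real m + 1))"
        using m by (intro divide_left_mono) auto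
      then show ?thesis using e1 e2 by simp
    qed
    ultimately show ?thesis by linarith
  qed
  have "1/(2*real (Suc m)) = 1/(2*(real m + 1))" by simp
  with A B show ?thesis by linarith
qed

lemma sti_bounds:
  assumes "m \<ge> 1"
  shows "1/2 \<le> sti m \<and> sti m \<le> 1"
proof -
  have s1: "sti 1 = 1" by (simp add: sti_def)
  have up: "sti m \<le> sti 1" using assms
  proof (induction m rule: dec_induct)
    case (step k) then show ?case using sti_dec[of k] by simp
  qed simp
  have lo: "sti 1 - 1/2 \<le> sti m - 1/(2*real m)" using assms
  proof (induction m rule: dec_induct)
    case (step k) then show ?case using sti_inc[of k] by simp
  qed simp
  have "1/(2*real m) \<ge> 0" by simp
  with up lo s1 show ?thesis by linarith
qed

lemma fact_sti:
  assumes "m \<ge> 1"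
  shows "(fact m :: real) = exp (sti m) * real m ^ m * sqrt (real m) / exp (real m)"
proof -
  have m: "real m > 0" using assms by simp
  have e: "exp ((real m + 1/2) * ln (real m)) = real m ^ m * sqrt (real m)"
  proof -
    have "exp ((real m + 1/2) * ln (real m)) = real m powr (real m + 1/2)"
      using m by (simp add: powr_def)
    also have "\<dots> = real m powr (real m) * real m powr (1/2)"
      using m by (simp add: powr_add)
    also have "\<dots> = real m ^ m * sqrt (real m)"
      using m by (simp add: powr_realpow powr_half_sqrt)
    finally show ?thesis .
  qed
  have "exp (sti m) = fact m * exp (real m) / exp ((real m + 1/2) * ln (real m))"
    unfolding sti_def by (simp add: exp_diff exp_add)
  then show ?thesis using e m by (simp add: field_simps)
qed


lemma regroup:
  fixes e1 x1 y1 f1 e2 x2 y2 f2 e3 x3 y3 f3 m X Y :: real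
  assumes "f1 \<noteq> 0" "f2 \<noteq> 0" "f3 \<noteq> 0" "e3 \<noteq> 0" "x3 \<noteq> 0" "y3 \<noteq> 0" "m \<noteq> 0"
  shows "(e1*x1*y1/f1)^2 * X * Y * (e2*x2*y2/f2) / (m * (e3*x3*y3/f3))
    = (e1^2*e2/e3) * (x1^2*x2/x3) * (y1^2*y2/(m*y3)) * X * Y * (f3/(f1^2*f2))"
  using assms by (simp add: field_simps power2_eq_square)

lemma F_formula:
  assumes k: "k \<ge> 1" and n: "n \<ge> 1"
  shows "(fact n)^2 * ((real k + 2)*(real k + 1))^n * (real k + 2)^n * fact (k*n)
           / (real n * fact ((k+2)*n))
         = exp (2* sti n + sti (k*n) - sti ((k+2)*n)) * sqrt (real k/(real k+2))
           * ((real k + 1) * real k ^ k / (real k + 2)^k)^n"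
proof -
  have kn: "k*n \<ge> 1" and k2n: "(k+2)*n \<ge> 1" using k n by auto
  have rn: "real n > 0" and rk: "real k > 0" using k n by auto
  define E where "E = exp (2* sti n + sti (k*n) - sti ((k+2)*n))"
  have E: "E = exp (sti n)^2 * exp (sti (k*n)) / exp (sti ((k+2)*n))"
  proof -
    have "exp (2 * sti n) = exp (sti n)^2" using exp_of_nat_mult[of 2 "sti n"] by simp
    then show ?thesis unfolding E_def by (simp add: exp_add exp_diff)
  qed
  have P1: "(real n ^ n)^2 * (real (k*n))^(k*n) / (real ((k+2)*n))^((k+2)*n)
      = (real k ^ k / (real k + 2)^(k+2))^n"
  proof -
    have "(real n ^ n)^2 = (real n ^ 2)^n" by (simp add: power_mult[symmetric] mult.commute)
    moreover have "(real (k*n))^(k*n) = (real k ^ k * real n ^ k)^n"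
      by (simp add: power_mult power_mult_distrib)
    moreover have "(real ((k+2)*n))^((k+2)*n) = ((real k + 2) ^ (k+2) * real n ^ (k+2))^n"
    proof -
      have h: "real ((k+2)*n) = (real k + 2) * real n" by (simp add: algebra_simps)
      show ?thesis by (simp only: h power_mult power_mult_distrib)
    qed
    moreover have "(real n ^ 2) * (real k ^ k * real n ^ k) / ((real k + 2) ^ (k+2) * real n ^ (k+2))
        = real k ^ k / (real k + 2)^(k+2)"
    proof -
      have gen: "\<And>a b c X::real. a \<noteq> 0 \<Longrightarrow> c \<noteq> 0 \<Longrightarrow> X \<noteq> 0 \<Longrightarrow> a * (b * c) / (X * (a * c)) = b / X"
        by (simp add: field_simps)
      have h2: "real n ^ (k+2) = real n ^ 2 * real n ^ k" by (simp add: power_add power2_eq_square)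
      show ?thesis unfolding h2 by (rule gen) (use rn in auto)
    qed
    ultimately show ?thesis by (simp add: power_mult_distrib[symmetric] power_divide[symmetric])
  qed
  have P2: "exp (real ((k+2)*n)) = exp (real n)^2 * exp (real (k*n))"
    by (simp add: exp_add[symmetric] power2_eq_square algebra_simps)
  have P3: "sqrt (real n)^2 * sqrt (real (k*n)) / (real n * sqrt (real ((k+2)*n)))
      = sqrt (real k/(real k+2))"
  proof -
    have h3: "real ((k+2)*n) = (real k + 2) * real n" by (simp add: algebra_simps)
    have h4: "real (k*n) = real k * real n" by simp
    have h5: "sqrt (real n)^2 = real n" by simp
    have gen: "\<And>a b c X::real. a \<noteq> 0 \<Longrightarrow> c \<noteq> 0 \<Longrightarrow> a * (b * c) / (a * (X * c)) = b / X"
      by (simp add: field_simps)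
    have "sqrt (real n)^2 * sqrt (real (k*n)) / (real n * sqrt (real ((k+2)*n)))
       = real n * (sqrt (real k) * sqrt (real n)) / (real n * (sqrt (real k + 2) * sqrt (real n)))"
      unfolding h3 h4 h5 real_sqrt_mult ..
    also have "\<dots> = sqrt (real k) / sqrt (real k + 2)" by (rule gen) (use rn in auto)
    finally show ?thesis by (simp add: real_sqrt_divide)
  qed
  have P4: "(real k ^ k / (real k + 2)^(k+2))^n * ((real k + 2)*(real k + 1))^n * (real k + 2)^n
      = ((real k + 1) * real k ^ k / (real k + 2)^k)^n"
  proof -
    have "real k ^ k / (real k + 2)^(k+2) * ((real k + 2)*(real k + 1)) * (real k + 2)
      = (real k + 1) * real k ^ k / (real k + 2)^k"
    proof -
      have gen: "\<And>K Y t u::real. Y \<noteq> 0 \<Longrightarrow> t \<noteq> 0 \<Longrightarrow> K / (Y * (t * t)) * (t * u) * t = u * K / Y"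
        by (simp add: field_simps)
      have h: "(real k + 2)^(k+2) = (real k + 2)^k * ((real k + 2) * (real k + 2))"
        by (simp add: power_add power2_eq_square)
      show ?thesis unfolding h by (rule gen) (use rk in auto)
    qed
    then show ?thesis by (metis power_mult_distrib)
  qed
  have "(fact n)^2 * ((real k + 2)*(real k + 1))^n * (real k + 2)^n * fact (k*n)
           / (real n * fact ((k+2)*n))
    = E * ((real n ^ n)^2 * (real (k*n))^(k*n) / (real ((k+2)*n))^((k+2)*n))
        * (sqrt (real n)^2 * sqrt (real (k*n)) / (real n * sqrt (real ((k+2)*n))))
        * ((real k + 2)*(real k + 1))^n * (real k + 2)^n
        * (exp (real ((k+2)*n)) / (exp (real n)^2 * exp (real (k*n))))"
    unfolding fact_sti[OF n] fact_sti[OF kn] fact_sti[OF k2n] E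
    by (rule regroup) (use rn rk k2n in \<open>auto simp del: of_nat_mult of_nat_add\<close>)
  also have "\<dots> = E * sqrt (real k/(real k+2)) * ((real k + 1) * real k ^ k / (real k + 2)^k)^n"
    unfolding P1 P3 P2[symmetric] using P4 by (simp add: algebra_simps)
  finally show ?thesis unfolding E_def .
qed


definition Bij :: "'a set \<Rightarrow> 'b set \<Rightarrow> ('a \<Rightarrow> 'b) set" where
  "Bij A B = {f \<in> A \<rightarrow>\<^sub>E B. bij_betw f A B}"

lemma card_inj_funcset:
  assumes "finite S" "finite T" "card S \<le> card T"
  shows "card {f \<in> S \<rightarrow>\<^sub>E T. inj_on f S} = fact (card T) div (fact (card T - card S))"
  using assms
proof (induct S arbitrary: T rule: finite_induct)
  case empty
  have "{f \<in> {} \<rightarrow>\<^sub>E T. inj_on f {}} = {\<lambda>x. undefined}"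
    by (auto simp: PiE_empty_domain)
  then show ?case by simp
next
  case (insert x S)
  have fin: "finite {f \<in> S \<rightarrow>\<^sub>E (T - {y}). inj_on f S}" for y
  proof (rule finite_subset)
    show "{f \<in> S \<rightarrow>\<^sub>E (T - {y}). inj_on f S} \<subseteq> S \<rightarrow>\<^sub>E (T - {y})" by auto
    show "finite (S \<rightarrow>\<^sub>E (T - {y}))" using insert by (intro finite_PiE) auto
  qed
  have hyps: "\<forall>y \<in> T. card {g \<in> S \<rightarrow>\<^sub>E (T - {y}). inj_on g S} =
      fact (card T - 1) div fact ((card T - 1) - card S)" (is "\<forall> _ \<in> T. _ = ?k")
    using insert by auto
  have "card {f \<in> (insert x S) \<rightarrow>\<^sub>E T. inj_on f (insert x S)} =
      card ((\<lambda>(y, g). g(x := y)) ` {(y, g). y \<in> T \<and> g \<in> S \<rightarrow>\<^sub>E (T - {y}) \<and> inj_on g S})"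
    using extensional_funcset_extend_domain_inj_on_eq[OF \<open>x \<notin> S\<close>] by metis
  also have "\<dots> = card {(y, g). y \<in> T \<and> g \<in> S \<rightarrow>\<^sub>E (T - {y}) \<and> inj_on g S}"
    using extensional_funcset_extend_domain_inj_onI[OF \<open>x \<notin> S\<close>, of T]
    by (simp add: card_image)
  also have "\<dots> = card (SIGMA y:T. {g \<in> S \<rightarrow>\<^sub>E (T - {y}). inj_on g S})"
    by (rule arg_cong[where f=card]) auto
  also have "\<dots> = (\<Sum>y \<in> T. card {g \<in> S \<rightarrow>\<^sub>E (T - {y}). inj_on g S})"
    using insert fin by (subst card_SigmaI) auto
  also have "\<dots> = card T * ?k"
    using hyps by auto
  also have "\<dots> = card T * fact (card T - 1) div fact (card T - card (insert x S))"
    using insert unfolding div_mult1_eq[of "card T" "fact (card T - 1)"]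
    by (simp add: fact_mod)
  also have "\<dots> = fact (card T) div fact (card T - card (insert x S))"
    using insert by (simp add: fact_reduce[of "card T"])
  finally show ?case .
qed

lemma card_Bij:
  assumes "finite A" "finite B" "card A = card B"
  shows "card (Bij A B) = fact (card A)"
proof -
  have "Bij A B = {f \<in> A \<rightarrow>\<^sub>E B. inj_on f A}"
  proof (intro set_eqI iffI)
    fix f assume "f \<in> Bij A B" then show "f \<in> {f \<in> A \<rightarrow>\<^sub>E B. inj_on f A}"
      unfolding Bij_def bij_betw_def by auto
  next
    fix f assume f: "f \<in> {f \<in> A \<rightarrow>\<^sub>E B. inj_on f A}"
    then have "f ` A \<subseteq> B" "inj_on f A" by auto
    moreover have "card (f ` A) = card B" using f assms by (simp add: card_image)
    ultimately have "f ` A = B" using assms by (metis card_subset_eq)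
    then show "f \<in> Bij A B" using f unfolding Bij_def bij_betw_def by auto
  qed
  then show ?thesis using card_inj_funcset[OF assms(1,2)] assms by simp
qed

lemma finite_Bij: "finite A \<Longrightarrow> finite B \<Longrightarrow> finite (Bij A B)"
  unfolding Bij_def by (rule finite_subset[OF _ finite_PiE[of A "\<lambda>_. B"]]) auto

lemma constrained_bij:
  assumes S: "finite S" and X: "X \<subseteq> S" and f: "inj_on f X" "f ` X \<subseteq> S"
  shows "bij_betw (\<lambda>\<sigma>. restrict \<sigma> (S - X)) {\<sigma> \<in> Bij S S. \<forall>x\<in>X. \<sigma> x = f x} (Bij (S - X) (S - f ` X))"
proof (rule bij_betw_byWitness[where f'="\<lambda>\<tau> s. if s \<in> S - X then \<tau> s else if s \<in> X then f s else undefined"])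
  show "\<forall>a\<in>{\<sigma> \<in> Bij S S. \<forall>x\<in>X. \<sigma> x = f x}.
     (\<lambda>s. if s \<in> S - X then restrict a (S - X) s else if s \<in> X then f s else undefined) = a"
  proof
    fix a assume a: "a \<in> {\<sigma> \<in> Bij S S. \<forall>x\<in>X. \<sigma> x = f x}"
    then have "a \<in> extensional S" unfolding Bij_def PiE_def by auto
    then show "(\<lambda>s. if s \<in> S - X then restrict a (S - X) s else if s \<in> X then f s else undefined) = a"
      using a X by (auto simp: extensional_def fun_eq_iff)
  qed
  show "\<forall>a'\<in>Bij (S - X) (S - f ` X).
     restrict (\<lambda>s. if s \<in> S - X then a' s else if s \<in> X then f s else undefined) (S - X) = a'"
    unfolding Bij_def by (auto simp: extensional_def fun_eq_iff PiE_def)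
  show "(\<lambda>\<sigma>. restrict \<sigma> (S - X)) ` {\<sigma> \<in> Bij S S. \<forall>x\<in>X. \<sigma> x = f x} \<subseteq> Bij (S - X) (S - f ` X)"
  proof
    fix t assume "t \<in> (\<lambda>\<sigma>. restrict \<sigma> (S - X)) ` {\<sigma> \<in> Bij S S. \<forall>x\<in>X. \<sigma> x = f x}"
    then obtain \<sigma> where s: "\<sigma> \<in> Bij S S" "\<forall>x\<in>X. \<sigma> x = f x" and t: "t = restrict \<sigma> (S - X)" by auto
    have bij: "bij_betw \<sigma> S S" using s unfolding Bij_def by auto
    have "\<sigma> ` X = f ` X" using s(2) by auto
    have "\<sigma> ` (S - X) = \<sigma> ` S - \<sigma> ` X"
      using bij X by (intro inj_on_image_set_diff) (auto simp: bij_betw_def)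
    also have "\<dots> = S - f ` X" using bij \<open>\<sigma> ` X = f ` X\<close> by (simp add: bij_betw_def)
    finally have img: "\<sigma> ` (S - X) = S - f ` X" .
    have "bij_betw \<sigma> (S - X) (S - f ` X)"
      using bij img unfolding bij_betw_def by (auto intro: inj_on_subset)
    then have "bij_betw t (S - X) (S - f ` X)"
      unfolding t by (rule bij_betw_cong[THEN iffD1, rotated]) auto
    moreover have "t \<in> (S - X) \<rightarrow>\<^sub>E (S - f ` X)" unfolding t using img by auto
    ultimately show "t \<in> Bij (S - X) (S - f ` X)" unfolding Bij_def by auto
  qed
  show "(\<lambda>\<tau> s. if s \<in> S - X then \<tau> s else if s \<in> X then f s else undefined) ` Bij (S - X) (S - f ` X)
      \<subseteq> {\<sigma> \<in> Bij S S. \<forall>x\<in>X. \<sigma> x = f x}"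
  proof
    fix g assume "g \<in> (\<lambda>\<tau> s. if s \<in> S - X then \<tau> s else if s \<in> X then f s else undefined) ` Bij (S - X) (S - f ` X)"
    then obtain \<tau> where tau: "\<tau> \<in> Bij (S - X) (S - f ` X)"
      and g: "g = (\<lambda>s. if s \<in> S - X then \<tau> s else if s \<in> X then f s else undefined)" by auto
    have tb: "bij_betw \<tau> (S - X) (S - f ` X)" using tau unfolding Bij_def by auto
    have gi1: "g ` (S - X) = S - f ` X"
      using tb unfolding g bij_betw_def by (auto simp: image_def)
    have gi2: "g ` X = f ` X" unfolding g by (auto simp: image_def)
    have gimg: "g ` S = S"
    proof -
      have "S = (S - X) \<union> X" using X by auto
      then have "g ` S = g ` (S - X) \<union> g ` X" by (metis image_Un)
      then show ?thesis using gi1 gi2 f X by auto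
    qed
    have ginj: "inj_on g S"
    proof (rule inj_onI)
      fix u v assume u: "u \<in> S" and v: "v \<in> S" and e: "g u = g v"
      show "u = v"
      proof (cases "u \<in> X"; cases "v \<in> X")
        assume "u \<in> X" "v \<in> X" then show ?thesis using e f unfolding g by (auto dest: inj_onD)
      next
        assume "u \<in> X" "v \<notin> X"
        then have "g v \<in> S - f ` X" using gi1 v by blast
        moreover have "g u \<in> f ` X" using \<open>u \<in> X\<close> unfolding g by auto
        ultimately show ?thesis using e by auto
      next
        assume "u \<notin> X" "v \<in> X"
        then have "g u \<in> S - f ` X" using gi1 u by blast
        moreover have "g v \<in> f ` X" using \<open>v \<in> X\<close> unfolding g by auto
        ultimately show ?thesis using e by auto
      next
        assume "u \<notin> X" "v \<notin> X"
        then show ?thesis using e u v tb unfolding g bij_betw_def by (auto dest: inj_onD)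
      qed
    qed
    have "g \<in> S \<rightarrow>\<^sub>E S"
    proof (rule PiE_I)
      fix s assume "s \<in> S" then show "g s \<in> S" using gimg by auto
    next
      fix s assume "s \<notin> S" then show "g s = undefined" using X unfolding g by auto
    qed
    with ginj gimg show "g \<in> {\<sigma> \<in> Bij S S. \<forall>x\<in>X. \<sigma> x = f x}"
      unfolding Bij_def bij_betw_def g by auto
  qed
qed

lemma card_constrained:
  assumes S: "finite S" and X: "X \<subseteq> S" and f: "inj_on f X" "f ` X \<subseteq> S"
  shows "card {\<sigma> \<in> Bij S S. \<forall>x\<in>X. \<sigma> x = f x} = fact (card S - card X)"
proof -
  have fin: "finite X" using S X finite_subset by auto
  have "card {\<sigma> \<in> Bij S S. \<forall>x\<in>X. \<sigma> x = f x} = card (Bij (S - X) (S - f ` X))"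
    using bij_betw_same_card[OF constrained_bij[OF assms]] .
  also have "\<dots> = fact (card (S - X))"
    using S X f fin by (intro card_Bij) (auto simp: card_Diff_subset card_image)
  also have "\<dots> = fact (card S - card X)" using fin X by (simp add: card_Diff_subset)
  finally show ?thesis .
qed

lemma card_constrained_idx:
  assumes S: "finite S" and K: "finite K"
    and x: "inj_on x K" "x ` K \<subseteq> S" and y: "inj_on y K" "y ` K \<subseteq> S"
  shows "card {\<sigma> \<in> Bij S S. \<forall>k\<in>K. \<sigma> (x k) = y k} = fact (card S - card K)"
proof -
  define f where "f = (\<lambda>s. y (the_inv_into K x s))"
  have fx: "f (x k) = y k" if "k \<in> K" for k
    unfolding f_def using the_inv_into_f_f[OF x(1) that] by simp
  have "{\<sigma> \<in> Bij S S. \<forall>k\<in>K. \<sigma> (x k) = y k} = {\<sigma> \<in> Bij S S. \<forall>s\<in>x ` K. \<sigma> s = f s}"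
    using fx by auto
  also have "card \<dots> = fact (card S - card (x ` K))"
  proof (rule card_constrained[OF S x(2)])
    show "inj_on f (x ` K)"
    proof (rule inj_onI)
      fix u v assume "u \<in> x ` K" "v \<in> x ` K" "f u = f v"
      then obtain i j where "i \<in> K" "j \<in> K" "u = x i" "v = x j" "y i = y j" using fx by auto
      then show "u = v" using y(1) by (auto dest: inj_onD)
    qed
    show "f ` x ` K \<subseteq> S" using fx y(2) by auto
  qed
  also have "card (x ` K) = card K" using x(1) by (simp add: card_image)
  finally show ?thesis .
qed


definition Pm :: "nat \<Rightarrow> (nat \<Rightarrow> nat) set" where "Pm n = Bij {..<n} {..<n}"

type_synonym wit = "(nat \<Rightarrow> nat) \<times> (nat \<Rightarrow> nat) \<times> (nat \<Rightarrow> nat) \<times> (nat \<Rightarrow> nat)"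

definition W0 :: "nat \<Rightarrow> nat \<Rightarrow> wit set" where
  "W0 n q = {(p,c,al,be). p \<in> Pm n \<and> c \<in> Pm n \<and> al \<in> {..<n} \<rightarrow>\<^sub>E {..<2*q}
      \<and> be \<in> (\<Pi>\<^sub>E i\<in>{..<n}. {..<2*q} - {al (Suc i mod n)})}"

definition goodw :: "(nat \<times> nat \<Rightarrow> nat \<times> nat) \<Rightarrow> nat \<Rightarrow> wit \<Rightarrow> bool" where
  "goodw \<sigma> n w = (case w of (p,c,al,be) \<Rightarrow> \<forall>i<n. fst (\<sigma> (p i, al i)) = c i
      \<and> fst (\<sigma> (p (Suc i mod n), be i)) = c i
      \<and> designated_pair (snd (\<sigma> (p i, al i))) (snd (\<sigma> (p (Suc i mod n), be i))))"

definition Wit :: "nat \<Rightarrow> nat \<Rightarrow> (nat \<times> nat \<Rightarrow> nat \<times> nat) \<Rightarrow> wit set" where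
  "Wit n q \<sigma> = {w \<in> W0 n q. goodw \<sigma> n w}"

definition Hm :: "nat \<Rightarrow> wit \<Rightarrow> (nat \<times> nat) set" where
  "Hm n w = (case w of (p,c,al,be) \<Rightarrow>
     (\<lambda>i. (p i, al i)) ` {..<n} \<union> (\<lambda>i. (p (Suc i mod n), be i)) ` {..<n})"

lemma Suc_mod_lt: "i < n \<Longrightarrow> Suc i mod n < n" by simp

lemma Suc_mod_if: "i < n \<Longrightarrow> Suc i mod n = (if Suc i = n then 0 else Suc i)"
  by auto

lemma Suc_mod_inj: "i < n \<Longrightarrow> j < n \<Longrightarrow> Suc i mod n = Suc j mod n \<Longrightarrow> i = j"
  by (auto simp: Suc_mod_if split: if_splits)

lemma Pm_D:
  assumes "p \<in> Pm n"
  shows "inj_on p {..<n}" "\<And>i. i < n \<Longrightarrow> p i < n" "bij_betw p {..<n} {..<n}" "p \<in> extensional {..<n}"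
  using assms unfolding Pm_def Bij_def bij_betw_def by (auto simp: PiE_def)

lemma traffic_eq:
  "{H. traffic_ham_cycle n q \<sigma> H} = Hm n ` Wit n q \<sigma>"
proof (intro set_eqI iffI)
  fix H assume "H \<in> {H. traffic_ham_cycle n q \<sigma> H}"
  then obtain p c a b where p: "bij_betw p {..<n} {..<n}" and c: "bij_betw c {..<n} {..<n}"
    and cond: "\<forall>i<n. a i \<in> half_edges n q \<and> fst (a i) = p i \<and>
               b i \<in> half_edges n q \<and> fst (b i) = p ((i + 1) mod n) \<and>
               fst (\<sigma> (a i)) = c i \<and> fst (\<sigma> (b i)) = c i \<and>
               designated_pair (snd (\<sigma> (a i))) (snd (\<sigma> (b i))) \<and>
               a ((i + 1) mod n) \<noteq> b i"
    and H: "H = a ` {..<n} \<union> b ` {..<n}"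
    unfolding traffic_ham_cycle_def by blast
  define p' where "p' = restrict p {..<n}"
  define c' where "c' = restrict c {..<n}"
  define al where "al = restrict (\<lambda>i. snd (a i)) {..<n}"
  define be where "be = restrict (\<lambda>i. snd (b i)) {..<n}"
  have aeq: "a i = (p' i, al i)" if "i < n" for i
    using cond that by (auto simp: p'_def al_def prod_eq_iff)
  have beq: "b i = (p' (Suc i mod n), be i)" if "i < n" for i
    using cond that by (auto simp: p'_def be_def prod_eq_iff)
  have ceq: "c' i = c i" if "i < n" for i using that by (simp add: c'_def)
  have pP: "p' \<in> Pm n"
  proof -
    have "bij_betw p' {..<n} {..<n}" unfolding p'_def
      using p by (rule bij_betw_cong[THEN iffD1, rotated]) auto
    moreover have "p' \<in> {..<n} \<rightarrow>\<^sub>E {..<n}" unfolding p'_def using p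
      by (auto simp: bij_betw_def)
    ultimately show ?thesis unfolding Pm_def Bij_def by auto
  qed
  have cP: "c' \<in> Pm n"
  proof -
    have "bij_betw c' {..<n} {..<n}" unfolding c'_def
      using c by (rule bij_betw_cong[THEN iffD1, rotated]) auto
    moreover have "c' \<in> {..<n} \<rightarrow>\<^sub>E {..<n}" unfolding c'_def using c
      by (auto simp: bij_betw_def)
    ultimately show ?thesis unfolding Pm_def Bij_def by auto
  qed
  have alP: "al \<in> {..<n} \<rightarrow>\<^sub>E {..<2*q}"
    using cond unfolding al_def half_edges_def by (auto simp: mem_Times_iff)
  have beP: "be \<in> (\<Pi>\<^sub>E i\<in>{..<n}. {..<2*q} - {al (Suc i mod n)})"
  proof (rule PiE_I)
    fix i assume i: "i \<in> {..<n}"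
    then have i': "i < n" by simp
    have s: "Suc i mod n < n" using i' by simp
    have "be i < 2*q" using cond i' unfolding be_def half_edges_def by (auto simp: mem_Times_iff)
    moreover have "be i \<noteq> al (Suc i mod n)"
    proof
      assume "be i = al (Suc i mod n)"
      then have "b i = a (Suc i mod n)" using aeq[OF s] beq[OF i'] by simp
      then show False using cond i' by auto
    qed
    ultimately show "be i \<in> {..<2*q} - {al (Suc i mod n)}" by auto
  next
    fix i assume "i \<notin> {..<n}" then show "be i = undefined" by (simp add: be_def)
  qed
  have W: "(p', c', al, be) \<in> W0 n q" unfolding W0_def using pP cP alP beP by auto
  have G: "goodw \<sigma> n (p', c', al, be)"
    unfolding goodw_def using cond aeq beq ceq by auto
  have "Hm n (p', c', al, be) = H"
  proof -
    have "a ` {..<n} = (\<lambda>i. (p' i, al i)) ` {..<n}" using aeq by (auto intro: image_cong)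
    moreover have "b ` {..<n} = (\<lambda>i. (p' (Suc i mod n), be i)) ` {..<n}" using beq by (auto intro: image_cong)
    ultimately show ?thesis unfolding Hm_def H by simp
  qed
  then show "H \<in> Hm n ` Wit n q \<sigma>" using W G unfolding Wit_def by force
next
  fix H assume "H \<in> Hm n ` Wit n q \<sigma>"
  then obtain p c al be where w: "(p, c, al, be) \<in> Wit n q \<sigma>" and H: "H = Hm n (p, c, al, be)"
    by auto
  have pP: "p \<in> Pm n" and cP: "c \<in> Pm n" and alP: "al \<in> {..<n} \<rightarrow>\<^sub>E {..<2*q}"
    and beP: "be \<in> (\<Pi>\<^sub>E i\<in>{..<n}. {..<2*q} - {al (Suc i mod n)})"
    and G: "goodw \<sigma> n (p, c, al, be)"
    using w unfolding Wit_def W0_def by auto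
  define a where "a = (\<lambda>i. (p i, al i))"
  define b where "b = (\<lambda>i. (p (Suc i mod n), be i))"
  have cond: "\<forall>i<n. a i \<in> half_edges n q \<and> fst (a i) = p i \<and>
               b i \<in> half_edges n q \<and> fst (b i) = p ((i + 1) mod n) \<and>
               fst (\<sigma> (a i)) = c i \<and> fst (\<sigma> (b i)) = c i \<and>
               designated_pair (snd (\<sigma> (a i))) (snd (\<sigma> (b i))) \<and>
               a ((i + 1) mod n) \<noteq> b i"
  proof (intro allI impI)
    fix i assume i: "i < n"
    have s: "Suc i mod n < n" using i by simp
    have be: "be i \<in> {..<2*q} - {al (Suc i mod n)}" using beP i by auto
    have "a i \<in> half_edges n q" using i Pm_D(2)[OF pP i] alP unfolding a_def half_edges_def by auto
    moreover have "b i \<in> half_edges n q" using Pm_D(2)[OF pP s] be unfolding b_def half_edges_def by auto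
    moreover have "a ((i + 1) mod n) \<noteq> b i" using be unfolding a_def b_def by auto
    moreover have "fst (\<sigma> (a i)) = c i \<and> fst (\<sigma> (b i)) = c i \<and>
               designated_pair (snd (\<sigma> (a i))) (snd (\<sigma> (b i)))"
      using G i unfolding goodw_def a_def b_def by auto
    ultimately show "a i \<in> half_edges n q \<and> fst (a i) = p i \<and>
               b i \<in> half_edges n q \<and> fst (b i) = p ((i + 1) mod n) \<and>
               fst (\<sigma> (a i)) = c i \<and> fst (\<sigma> (b i)) = c i \<and>
               designated_pair (snd (\<sigma> (a i))) (snd (\<sigma> (b i))) \<and>
               a ((i + 1) mod n) \<noteq> b i" unfolding a_def b_def by simp
  qed
  have HH: "H = a ` {..<n} \<union> b ` {..<n}" unfolding H Hm_def a_def b_def by simp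
  have "traffic_ham_cycle n q \<sigma> H"
    unfolding traffic_ham_cycle_def
    apply (rule exI[of _ p], rule exI[of _ c], rule exI[of _ a], rule exI[of _ b])
    using Pm_D(3)[OF pP] Pm_D(3)[OF cP] cond HH by blast
  then show "H \<in> {H. traffic_ham_cycle n q \<sigma> H}" by simp
qed


lemma mod_lt2: "(a::nat) < 2*n \<Longrightarrow> a mod n = (if a < n then a else a - n)"
proof (cases "a < n")
  case False
  assume "a < 2*n"
  then have "a - n < n" using False by simp
  then show ?thesis using False by (simp add: le_mod_geq)
qed simp

lemma mod_shift_inj:
  assumes "(i::nat) < n" "j < n" "(i + k) mod n = (j + k) mod n" shows "i = j"
proof -
  have r: "k mod n < n" using assms by simp
  have "(i + k mod n) mod n = (j + k mod n) mod n" using assms(3) by (simp add: mod_add_right_eq)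
  moreover have "i + k mod n < 2*n" "j + k mod n < 2*n" using assms(1,2) r by linarith+
  ultimately have "(if i + k mod n < n then i + k mod n else i + k mod n - n)
      = (if j + k mod n < n then j + k mod n else j + k mod n - n)"
    using mod_lt2 by metis
  then show ?thesis using assms(1,2) by (auto split: if_splits)
qed

lemma Wit_D:
  assumes "(p,c,al,be) \<in> Wit n q \<sigma>"
  shows "p \<in> Pm n" "c \<in> Pm n" "al \<in> {..<n} \<rightarrow>\<^sub>E {..<2*q}"
    "be \<in> (\<Pi>\<^sub>E i\<in>{..<n}. {..<2*q} - {al (Suc i mod n)})"
    "\<And>i. i<n \<Longrightarrow> fst (\<sigma> (p i, al i)) = c i"
    "\<And>i. i<n \<Longrightarrow> fst (\<sigma> (p (Suc i mod n), be i)) = c i"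
    "\<And>i. i<n \<Longrightarrow> designated_pair (snd (\<sigma> (p i, al i))) (snd (\<sigma> (p (Suc i mod n), be i)))"
  using assms unfolding Wit_def W0_def goodw_def by auto

lemma Wit_AB_ne:
  assumes "(p,c,al,be) \<in> Wit n q \<sigma>" "i < n"
  shows "(p i, al i) \<noteq> (p (Suc i mod n), be i)"
proof
  assume "(p i, al i) = (p (Suc i mod n), be i)"
  then have "snd (\<sigma> (p i, al i)) = snd (\<sigma> (p (Suc i mod n), be i))" by simp
  then show False using Wit_D(7)[OF assms] unfolding designated_pair_def by simp
qed

lemma be_ne:
  assumes "(p,c,al,be) \<in> Wit n q \<sigma>" "i < n"
  shows "be i \<noteq> al (Suc i mod n)" "be i < 2*q"
  using Wit_D(4)[OF assms(1)] assms(2) by (auto simp: PiE_iff)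

lemma Hm_mem: "x \<in> Hm n (p,c,al,be) \<longleftrightarrow> (\<exists>i<n. x = (p i, al i) \<or> x = (p (Suc i mod n), be i))"
  unfolding Hm_def by auto

lemma K1:
  assumes w: "(p,c,al,be) \<in> Wit n q \<sigma>" and j: "j < n" and x: "x \<in> Hm n (p,c,al,be)"
    and fx: "fst (\<sigma> x) = c j" and ne: "x \<noteq> (p j, al j)"
  shows "x = (p (Suc j mod n), be j)"
proof -
  obtain i where i: "i < n" and disj: "x = (p i, al i) \<or> x = (p (Suc i mod n), be i)"
    using x Hm_mem by blast
  have ci: "inj_on c {..<n}" using Pm_D(1)[OF Wit_D(2)[OF w]] .
  from disj show ?thesis
  proof
    assume xa: "x = (p i, al i)"
    then have "c i = c j" using fx Wit_D(5)[OF w i] by simp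
    then have "i = j" using ci i j by (auto dest: inj_onD)
    then show ?thesis using xa ne by simp
  next
    assume xb: "x = (p (Suc i mod n), be i)"
    then have "c i = c j" using fx Wit_D(6)[OF w i] by simp
    then have "i = j" using ci i j by (auto dest: inj_onD)
    then show ?thesis using xb by simp
  qed
qed

lemma K2:
  assumes w: "(p,c,al,be) \<in> Wit n q \<sigma>" and j: "j < n" and x: "x \<in> Hm n (p,c,al,be)"
    and fx: "fst x = p (Suc j mod n)" and ne: "x \<noteq> (p (Suc j mod n), be j)"
  shows "x = (p (Suc j mod n), al (Suc j mod n))"
proof -
  obtain i where i: "i < n" and disj: "x = (p i, al i) \<or> x = (p (Suc i mod n), be i)"
    using x Hm_mem by blast
  have pi: "inj_on p {..<n}" using Pm_D(1)[OF Wit_D(1)[OF w]] .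
  have sj: "Suc j mod n < n" using j by simp
  from disj show ?thesis
  proof
    assume xa: "x = (p i, al i)"
    then have "p i = p (Suc j mod n)" using fx by simp
    then have "i = Suc j mod n" using pi i sj by (auto dest: inj_onD)
    then show ?thesis using xa by simp
  next
    assume xb: "x = (p (Suc i mod n), be i)"
    have si: "Suc i mod n < n" using i by simp
    have "p (Suc i mod n) = p (Suc j mod n)" using fx xb by simp
    then have "Suc i mod n = Suc j mod n" using pi si sj by (auto dest: inj_onD)
    then have "i = j" using Suc_mod_inj i j by blast
    then show ?thesis using xb ne by simp
  qed
qed

lemma fiber_S1:
  assumes w: "(p,c,al,be) \<in> Wit n q \<sigma>" and w': "(p',c',al',be') \<in> Wit n q \<sigma>"
    and H: "Hm n (p,c,al,be) = Hm n (p',c',al',be')"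
    and i: "i < n" and A: "(p i, al i) = (p' i, al' i)"
  shows "(p (Suc i mod n), be i) = (p' (Suc i mod n), be' i)"
proof -
  have cc: "c' i = c i" using Wit_D(5)[OF w i] Wit_D(5)[OF w' i] A by simp
  have "(p' (Suc i mod n), be' i) \<in> Hm n (p',c',al',be')"
    unfolding Hm_mem by (rule exI[of _ i]) (use i in simp)
  then have x: "(p' (Suc i mod n), be' i) \<in> Hm n (p,c,al,be)" using H by simp
  have f: "fst (\<sigma> (p' (Suc i mod n), be' i)) = c i" using Wit_D(6)[OF w' i] cc by simp
  have ne: "(p' (Suc i mod n), be' i) \<noteq> (p i, al i)"
    using not_sym[OF Wit_AB_ne[OF w' i]] A by metis
  have "(p' (Suc i mod n), be' i) = (p (Suc i mod n), be i)" by (rule K1[OF w i x f ne])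
  then show ?thesis by simp
qed

lemma fiber_S2:
  assumes w: "(p,c,al,be) \<in> Wit n q \<sigma>" and w': "(p',c',al',be') \<in> Wit n q \<sigma>"
    and H: "Hm n (p,c,al,be) = Hm n (p',c',al',be')"
    and i: "Suc i < n" and B: "(p (Suc i mod n), be i) = (p' (Suc i mod n), be' i)"
  shows "(p (Suc i), al (Suc i)) = (p' (Suc i), al' (Suc i))"
proof -
  have i': "i < n" using i by simp
  have m: "Suc i mod n = Suc i" using i by simp
  have "(p' (Suc i), al' (Suc i)) \<in> Hm n (p',c',al',be')"
    unfolding Hm_mem by (rule exI[of _ "Suc i"]) (use i in simp)
  then have x: "(p' (Suc i), al' (Suc i)) \<in> Hm n (p,c,al,be)" using H by simp
  have f: "fst (p' (Suc i), al' (Suc i)) = p (Suc i mod n)" using B m by simp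
  have ne: "(p' (Suc i), al' (Suc i)) \<noteq> (p (Suc i mod n), be i)"
  proof
    assume "(p' (Suc i), al' (Suc i)) = (p (Suc i mod n), be i)"
    then have "al' (Suc i) = be' i" using B by simp
    then show False using be_ne(1)[OF w' i'] m by simp
  qed
  have "(p' (Suc i), al' (Suc i)) = (p (Suc i mod n), al (Suc i mod n))" by (rule K2[OF w i' x f ne])
  then show ?thesis unfolding m by simp
qed

lemma fiber_all:
  assumes w: "(p,c,al,be) \<in> Wit n q \<sigma>" and w': "(p',c',al',be') \<in> Wit n q \<sigma>"
    and H: "Hm n (p,c,al,be) = Hm n (p',c',al',be')"
    and z: "p 0 = p' 0" "al 0 = al' 0"
  shows "i < n \<longrightarrow> (p i, al i) = (p' i, al' i) \<and> (p (Suc i mod n), be i) = (p' (Suc i mod n), be' i)"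
proof (induction i)
  case 0
  show ?case
  proof
    assume n: "0 < n"
    have "(p 0, al 0) = (p' 0, al' 0)" using z by simp
    then show "(p 0, al 0) = (p' 0, al' 0) \<and> (p (Suc 0 mod n), be 0) = (p' (Suc 0 mod n), be' 0)"
      using fiber_S1[OF w w' H n] by blast
  qed
next
  case (Suc i)
  show ?case
  proof
    assume si: "Suc i < n"
    then have "(p (Suc i mod n), be i) = (p' (Suc i mod n), be' i)" using Suc by simp
    then have A: "(p (Suc i), al (Suc i)) = (p' (Suc i), al' (Suc i))" using fiber_S2[OF w w' H si] by blast
    show "(p (Suc i), al (Suc i)) = (p' (Suc i), al' (Suc i)) \<and>
        (p (Suc (Suc i) mod n), be (Suc i)) = (p' (Suc (Suc i) mod n), be' (Suc i))"
      using A fiber_S1[OF w w' H si A] by blast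
  qed
qed

lemma fiber_inj:
  assumes w: "(p,c,al,be) \<in> Wit n q \<sigma>" and w': "(p',c',al',be') \<in> Wit n q \<sigma>"
    and H: "Hm n (p,c,al,be) = Hm n (p',c',al',be')"
    and z: "p 0 = p' 0" "al 0 = al' 0"
  shows "(p,c,al,be) = (p',c',al',be')"
proof -
  note all = fiber_all[OF w w' H z, rule_format]
  have "p = p'"
  proof (rule extensionalityI[OF Pm_D(4)[OF Wit_D(1)[OF w]] Pm_D(4)[OF Wit_D(1)[OF w']]])
    fix i assume "i \<in> {..<n}" then show "p i = p' i" using all[of i] by simp
  qed
  moreover have "al = al'"
  proof (rule extensionalityI)
    show "al \<in> extensional {..<n}" using Wit_D(3)[OF w] by (simp add: PiE_iff)
    show "al' \<in> extensional {..<n}" using Wit_D(3)[OF w'] by (simp add: PiE_iff)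
    fix i assume "i \<in> {..<n}" then show "al i = al' i" using all[of i] by simp
  qed
  moreover have "be = be'"
  proof (rule extensionalityI)
    show "be \<in> extensional {..<n}" using Wit_D(4)[OF w] by (simp add: PiE_iff)
    show "be' \<in> extensional {..<n}" using Wit_D(4)[OF w'] by (simp add: PiE_iff)
    fix i assume "i \<in> {..<n}" then show "be i = be' i" using all[of i] by simp
  qed
  moreover have "c = c'"
  proof (rule extensionalityI[OF Pm_D(4)[OF Wit_D(2)[OF w]] Pm_D(4)[OF Wit_D(2)[OF w']]])
    fix i assume "i \<in> {..<n}"
    then have i: "i < n" by simp
    have "(p i, al i) = (p' i, al' i)" using all[of i] i by simp
    then show "c i = c' i" using Wit_D(5)[OF w i] Wit_D(5)[OF w' i] by simp
  qed
  ultimately show ?thesis by simp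
qed


definition rot :: "nat \<Rightarrow> nat \<Rightarrow> wit \<Rightarrow> wit" where
  "rot n k w = (case w of (p,c,al,be) \<Rightarrow>
     (restrict (\<lambda>i. p ((i+k) mod n)) {..<n}, restrict (\<lambda>i. c ((i+k) mod n)) {..<n},
      restrict (\<lambda>i. al ((i+k) mod n)) {..<n}, restrict (\<lambda>i. be ((i+k) mod n)) {..<n}))"

lemma sh_bij:
  assumes n: "(n::nat) > 0" shows "bij_betw (\<lambda>i. (i+k) mod n) {..<n} {..<n}"
proof -
  have inj: "inj_on (\<lambda>i. (i+k) mod n) {..<n}"
  proof (rule inj_onI)
    fix x y :: nat assume "x \<in> {..<n}" "y \<in> {..<n}" "(x + k) mod n = (y + k) mod n"
    then show "x = y" using mod_shift_inj[of x n y k] by simp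
  qed
  have sub: "(\<lambda>i. (i+k) mod n) ` {..<n} \<subseteq> {..<n}" using n by auto
  have "(\<lambda>i. (i+k) mod n) ` {..<n} = {..<n}" by (rule endo_inj_surj[OF _ sub inj]) simp
  then show ?thesis using inj unfolding bij_betw_def by simp
qed

lemma sh_Suc: "((Suc i mod n) + k) mod n = Suc ((i + k) mod n) mod n"
  by (simp add: mod_Suc_eq mod_add_left_eq)

lemma Pm_comp:
  assumes n: "n > 0" and p: "p \<in> Pm n"
  shows "restrict (\<lambda>i. p ((i+k) mod n)) {..<n} \<in> Pm n"
proof -
  have b: "bij_betw (p \<circ> (\<lambda>i. (i+k) mod n)) {..<n} {..<n}"
    using bij_betw_trans[OF sh_bij[OF n] Pm_D(3)[OF p]] .
  have "bij_betw (restrict (\<lambda>i. p ((i+k) mod n)) {..<n}) {..<n} {..<n}"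
    using b by (rule bij_betw_cong[THEN iffD1, rotated]) auto
  moreover have "restrict (\<lambda>i. p ((i+k) mod n)) {..<n} \<in> {..<n} \<rightarrow>\<^sub>E {..<n}"
    using Pm_D(2)[OF p] n by auto
  ultimately show ?thesis unfolding Pm_def Bij_def by auto
qed

lemma rot_Wit:
  assumes n: "n > 0" and w: "(p,c,al,be) \<in> Wit n q \<sigma>"
  shows "rot n k (p,c,al,be) \<in> Wit n q \<sigma>"
proof -
  define s where "s = (\<lambda>i. (i+k) mod n)"
  have sl: "s i < n" for i using n by (simp add: s_def)
  have ssuc: "s (Suc i mod n) = Suc (s i) mod n" for i unfolding s_def by (rule sh_Suc)
  have R: "rot n k (p,c,al,be) = (restrict (\<lambda>i. p (s i)) {..<n}, restrict (\<lambda>i. c (s i)) {..<n},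
      restrict (\<lambda>i. al (s i)) {..<n}, restrict (\<lambda>i. be (s i)) {..<n})"
    unfolding rot_def s_def by simp
  have P: "restrict (\<lambda>i. p (s i)) {..<n} \<in> Pm n" "restrict (\<lambda>i. c (s i)) {..<n} \<in> Pm n"
    unfolding s_def using Pm_comp[OF n Wit_D(1)[OF w]] Pm_comp[OF n Wit_D(2)[OF w]] by auto
  have alv: "al j < 2*q" if "j < n" for j using Wit_D(3)[OF w] that by (auto simp: PiE_iff)
  have AL: "restrict (\<lambda>i. al (s i)) {..<n} \<in> {..<n} \<rightarrow>\<^sub>E {..<2*q}"
    using alv sl by auto
  have BE: "restrict (\<lambda>i. be (s i)) {..<n} \<in>
      (\<Pi>\<^sub>E i\<in>{..<n}. {..<2*q} - {restrict (\<lambda>i. al (s i)) {..<n} (Suc i mod n)})"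
  proof (rule PiE_I)
    fix i assume i: "i \<in> {..<n}"
    have si: "Suc i mod n < n" using i by simp
    have "be (s i) < 2*q" "be (s i) \<noteq> al (Suc (s i) mod n)" using be_ne[OF w sl] by auto
    then show "restrict (\<lambda>i. be (s i)) {..<n} i \<in> {..<2*q} - {restrict (\<lambda>i. al (s i)) {..<n} (Suc i mod n)}"
      using i si ssuc by auto
  qed auto
  have G: "goodw \<sigma> n (restrict (\<lambda>i. p (s i)) {..<n}, restrict (\<lambda>i. c (s i)) {..<n},
      restrict (\<lambda>i. al (s i)) {..<n}, restrict (\<lambda>i. be (s i)) {..<n})"
    unfolding goodw_def
  proof (simp only: prod.case, intro allI impI)
    fix i assume i: "i < n"
    have si: "Suc i mod n < n" using i by simp
    have e: "restrict (\<lambda>i. p (s i)) {..<n} (Suc i mod n) = p (Suc (s i) mod n)"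
      using si ssuc by simp
    show "fst (\<sigma> (restrict (\<lambda>i. p (s i)) {..<n} i, restrict (\<lambda>i. al (s i)) {..<n} i)) = restrict (\<lambda>i. c (s i)) {..<n} i \<and>
         fst (\<sigma> (restrict (\<lambda>i. p (s i)) {..<n} (Suc i mod n), restrict (\<lambda>i. be (s i)) {..<n} i)) = restrict (\<lambda>i. c (s i)) {..<n} i \<and>
         designated_pair (snd (\<sigma> (restrict (\<lambda>i. p (s i)) {..<n} i, restrict (\<lambda>i. al (s i)) {..<n} i)))
          (snd (\<sigma> (restrict (\<lambda>i. p (s i)) {..<n} (Suc i mod n), restrict (\<lambda>i. be (s i)) {..<n} i)))"
      unfolding e using i Wit_D(5,6,7)[OF w sl[of i]] by simp
  qed
  show ?thesis unfolding R Wit_def W0_def using P AL BE G by auto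
qed

lemma rot_Hm:
  assumes n: "n > 0"
  shows "Hm n (rot n k (p,c,al,be)) = Hm n (p,c,al,be)"
proof -
  define s where "s = (\<lambda>i. (i+k) mod n)"
  have sl: "s i < n" for i using n by (simp add: s_def)
  have ssuc: "s (Suc i mod n) = Suc (s i) mod n" for i unfolding s_def by (rule sh_Suc)
  have simg: "s ` {..<n} = {..<n}" using sh_bij[OF n, of k] unfolding s_def bij_betw_def by simp
  have R: "rot n k (p,c,al,be) = (restrict (\<lambda>i. p (s i)) {..<n}, restrict (\<lambda>i. c (s i)) {..<n},
      restrict (\<lambda>i. al (s i)) {..<n}, restrict (\<lambda>i. be (s i)) {..<n})"
    unfolding rot_def s_def by simp
  have A: "(\<lambda>i. (restrict (\<lambda>i. p (s i)) {..<n} i, restrict (\<lambda>i. al (s i)) {..<n} i)) ` {..<n}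
      = (\<lambda>j. (p j, al j)) ` {..<n}"
  proof -
    have "(\<lambda>i. (restrict (\<lambda>i. p (s i)) {..<n} i, restrict (\<lambda>i. al (s i)) {..<n} i)) ` {..<n}
        = (\<lambda>j. (p j, al j)) ` (s ` {..<n})"
      by (auto simp: image_iff)
    then show ?thesis unfolding simg .
  qed
  have B: "(\<lambda>i. (restrict (\<lambda>i. p (s i)) {..<n} (Suc i mod n), restrict (\<lambda>i. be (s i)) {..<n} i)) ` {..<n}
      = (\<lambda>j. (p (Suc j mod n), be j)) ` {..<n}"
  proof -
    have e: "(restrict (\<lambda>i. p (s i)) {..<n} (Suc i mod n), restrict (\<lambda>i. be (s i)) {..<n} i)
        = (p (Suc (s i) mod n), be (s i))" if "i < n" for i
      using that ssuc by simp
    have "(\<lambda>i. (restrict (\<lambda>i. p (s i)) {..<n} (Suc i mod n), restrict (\<lambda>i. be (s i)) {..<n} i)) ` {..<n}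
        = (\<lambda>i. (p (Suc (s i) mod n), be (s i))) ` {..<n}"
      using e by (intro image_cong) auto
    also have "\<dots> = (\<lambda>j. (p (Suc j mod n), be j)) ` (s ` {..<n})" by (simp add: image_image)
    finally show ?thesis unfolding simg .
  qed
  show ?thesis unfolding R Hm_def using A B by simp
qed

lemma finite_W0: "finite (W0 n q)"
proof (rule finite_subset)
  show "W0 n q \<subseteq> Pm n \<times> Pm n \<times> ({..<n} \<rightarrow>\<^sub>E {..<2*q}) \<times> ({..<n} \<rightarrow>\<^sub>E {..<2*q})"
  proof
    fix w assume "w \<in> W0 n q"
    then obtain p c al be where w: "w = (p,c,al,be)" "p \<in> Pm n" "c \<in> Pm n"
      "al \<in> {..<n} \<rightarrow>\<^sub>E {..<2*q}" "be \<in> (\<Pi>\<^sub>E i\<in>{..<n}. {..<2*q} - {al (Suc i mod n)})"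
      unfolding W0_def by auto
    have "be \<in> {..<n} \<rightarrow>\<^sub>E {..<2*q}"
      using w(5) PiE_mono[of "{..<n}" "\<lambda>i. {..<2*q} - {al (Suc i mod n)}" "\<lambda>_. {..<2*q}"] by auto
    then show "w \<in> Pm n \<times> Pm n \<times> ({..<n} \<rightarrow>\<^sub>E {..<2*q}) \<times> ({..<n} \<rightarrow>\<^sub>E {..<2*q})"
      using w by auto
  qed
  show "finite (Pm n \<times> Pm n \<times> ({..<n} \<rightarrow>\<^sub>E {..<2*q}) \<times> ({..<n} \<rightarrow>\<^sub>E {..<2*q}))"
    unfolding Pm_def by (intro finite_cartesian_product finite_Bij finite_PiE) auto
qed

lemma finite_Wit: "finite (Wit n q \<sigma>)"
  using finite_W0 unfolding Wit_def by auto

lemma fiber_card: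
  assumes n: "n > 0" and w: "w \<in> Wit n q \<sigma>"
  shows "n \<le> card {w' \<in> Wit n q \<sigma>. Hm n w' = Hm n w}"
    and "card {w' \<in> Wit n q \<sigma>. Hm n w' = Hm n w} \<le> 2 * n"
proof -
  obtain p c al be where wd: "w = (p,c,al,be)" by (cases w) auto
  let ?F = "{w' \<in> Wit n q \<sigma>. Hm n w' = Hm n w}"
  have finF: "finite ?F" using finite_Wit by auto
  have sub: "(\<lambda>k. rot n k w) ` {..<n} \<subseteq> ?F"
    using rot_Wit[OF n] rot_Hm[OF n] w unfolding wd by auto
  have inj: "inj_on (\<lambda>k. rot n k w) {..<n}"
  proof (rule inj_onI)
    fix k k' assume k: "k \<in> {..<n}" and k': "k' \<in> {..<n}" and e: "rot n k w = rot n k' w"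
    then have "fst (rot n k w) 0 = fst (rot n k' w) 0" by simp
    then have "p k = p k'" using k k' n unfolding wd rot_def by simp
    then show "k = k'" using Pm_D(1)[OF Wit_D(1)[OF w[unfolded wd]]] k k' by (auto dest: inj_onD)
  qed
  have "n = card ((\<lambda>k. rot n k w) ` {..<n})" using inj by (simp add: card_image)
  also have "\<dots> \<le> card ?F" by (rule card_mono[OF finF sub])
  finally show "n \<le> card ?F" .
  have inj2: "inj_on (\<lambda>w'. (fst w' 0, fst (snd (snd w')) 0)) ?F"
  proof (rule inj_onI)
    fix u v assume u: "u \<in> ?F" and v: "v \<in> ?F" and e: "(fst u 0, fst (snd (snd u)) 0) = (fst v 0, fst (snd (snd v)) 0)"
    obtain p1 c1 a1 b1 where ud: "u = (p1,c1,a1,b1)" by (cases u) auto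
    obtain p2 c2 a2 b2 where vd: "v = (p2,c2,a2,b2)" by (cases v) auto
    show "u = v" unfolding ud vd
      by (rule fiber_inj) (use u v e in \<open>auto simp: ud vd\<close>)
  qed
  have img: "(\<lambda>w'. (fst w' 0, fst (snd (snd w')) 0)) ` ?F \<subseteq> Hm n w"
  proof
    fix x assume "x \<in> (\<lambda>w'. (fst w' 0, fst (snd (snd w')) 0)) ` ?F"
    then obtain u where u: "u \<in> ?F" and x: "x = (fst u 0, fst (snd (snd u)) 0)" by auto
    obtain p1 c1 a1 b1 where ud: "u = (p1,c1,a1,b1)" by (cases u) auto
    have "x \<in> Hm n u" unfolding ud x Hm_mem by (rule exI[of _ 0]) (use n in simp)
    then show "x \<in> Hm n w" using u by simp
  qed
  have cardH: "card (Hm n w) \<le> 2 * n"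
  proof -
    have "card (Hm n w) \<le> card ((\<lambda>i. (p i, al i)) ` {..<n}) + card ((\<lambda>i. (p (Suc i mod n), be i)) ` {..<n})"
      unfolding wd Hm_def by (simp add: card_Un_le)
    also have "\<dots> \<le> n + n" by (intro add_mono card_image_le[THEN order_trans]) auto
    finally show ?thesis by simp
  qed
  have finH: "finite (Hm n w)" unfolding wd Hm_def by simp
  have "card ?F = card ((\<lambda>w'. (fst w' 0, fst (snd (snd w')) 0)) ` ?F)" using inj2 by (simp add: card_image)
  also have "\<dots> \<le> card (Hm n w)" by (rule card_mono[OF finH img])
  finally show "card ?F \<le> 2 * n" using cardH by simp
qed

lemma Y_eq: "Y n q \<sigma> = card (Hm n ` Wit n q \<sigma>)"
  unfolding Y_def traffic_eq ..

lemma Y_bounds: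
  assumes n: "n > 0"
  shows "n * Y n q \<sigma> \<le> card (Wit n q \<sigma>) \<and> card (Wit n q \<sigma>) \<le> 2 * n * Y n q \<sigma>"
proof -
  let ?I = "Hm n ` Wit n q \<sigma>"
  let ?F = "\<lambda>H. {w' \<in> Wit n q \<sigma>. Hm n w' = H}"
  have U: "Wit n q \<sigma> = (\<Union>H\<in>?I. ?F H)" by auto
  have "card (Wit n q \<sigma>) = (\<Sum>H\<in>?I. card (?F H))"
    by (subst U, rule card_UN_disjoint) (use finite_Wit in auto)
  moreover have "n \<le> card (?F H) \<and> card (?F H) \<le> 2 * n" if "H \<in> ?I" for H
    using that fiber_card[OF n] by auto
  ultimately have "card ?I * n \<le> card (Wit n q \<sigma>) \<and> card (Wit n q \<sigma>) \<le> card ?I * (2 * n)"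
    using sum_bounded_below[of ?I n "\<lambda>H. card (?F H)"] sum_bounded_above[of ?I "\<lambda>H. card (?F H)" "2*n"]
    by auto
  then show ?thesis unfolding Y_eq by (simp add: mult.commute)
qed


definition partner :: "nat \<Rightarrow> nat" where "partner j = (if even j then Suc j else j - 1)"

lemma desig_iff: "designated_pair j j' \<longleftrightarrow> j' = partner j"
  unfolding designated_pair_def partner_def by presburger

lemma partner_lt: "j < 2*q \<Longrightarrow> partner j < 2*q"
  unfolding partner_def by presburger

lemma partner_ne: "partner j \<noteq> j"
  unfolding partner_def by presburger

lemma configs_eq: "configurations n q = Bij (half_edges n q) (half_edges n q)"
  unfolding configurations_def Bij_def ..

lemma finite_HE: "finite (half_edges n q)" unfolding half_edges_def by simp

lemma card_HE: "card (half_edges n q) = n * (2*q)" unfolding half_edges_def by (simp add: card_cartesian_product)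

lemma count_good:
  assumes w: "(p,c,al,be) \<in> W0 n q"
  shows "card {\<sigma> \<in> configurations n q. goodw \<sigma> n (p,c,al,be)} = (2*q)^n * fact (n*(2*q) - n*2)"
proof -
  have pP: "p \<in> Pm n" and cP: "c \<in> Pm n" and alP: "al \<in> {..<n} \<rightarrow>\<^sub>E {..<2*q}"
    and beP: "be \<in> (\<Pi>\<^sub>E i\<in>{..<n}. {..<2*q} - {al (Suc i mod n)})"
    using w unfolding W0_def by auto
  have alv: "al i < 2*q" if "i < n" for i using alP that by (auto simp: PiE_iff)
  have bev: "be i < 2*q" "be i \<noteq> al (Suc i mod n)" if "i < n" for i using beP that by (auto simp: PiE_iff)
  define HE where "HE = half_edges n q"
  define K where "K = {..<n} \<times> (UNIV :: bool set)"
  define x where "x = (\<lambda>(i,t). if t then (p (Suc i mod n), be i) else (p i, al i))"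
  define y where "y = (\<lambda>g (i,t). if t then (c i, partner (g i)) else (c i, (g i::nat)))"
  define G where "G = {..<n} \<rightarrow>\<^sub>E {..<2*q}"
  define P where "P g = {\<sigma> \<in> Bij HE HE. \<forall>\<kappa>\<in>K. \<sigma> (x \<kappa>) = y g \<kappa>}" for g
  have xF: "x (i, False) = (p i, al i)" and xT: "x (i, True) = (p (Suc i mod n), be i)" for i
    unfolding x_def by auto
  have yF: "y g (i, False) = (c i, g i)" and yT: "y g (i, True) = (c i, partner (g i))" for g i
    unfolding y_def by auto
  have PK: "\<sigma> \<in> P g \<longleftrightarrow> \<sigma> \<in> Bij HE HE \<and> (\<forall>i<n. \<sigma> (p i, al i) = (c i, g i) \<and> \<sigma> (p (Suc i mod n), be i) = (c i, partner (g i)))"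
    for \<sigma> g
  proof -
    have "(\<forall>\<kappa>\<in>K. \<sigma> (x \<kappa>) = y g \<kappa>) \<longleftrightarrow> (\<forall>i<n. \<sigma> (p i, al i) = (c i, g i) \<and> \<sigma> (p (Suc i mod n), be i) = (c i, partner (g i)))"
    proof
      assume h: "\<forall>\<kappa>\<in>K. \<sigma> (x \<kappa>) = y g \<kappa>"
      show "\<forall>i<n. \<sigma> (p i, al i) = (c i, g i) \<and> \<sigma> (p (Suc i mod n), be i) = (c i, partner (g i))"
      proof (intro allI impI conjI)
        fix i assume "i < n"
        then have "(i, False) \<in> K" "(i, True) \<in> K" unfolding K_def by auto
        then show "\<sigma> (p i, al i) = (c i, g i)" "\<sigma> (p (Suc i mod n), be i) = (c i, partner (g i))"
          using h xF xT yF yT by metis+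
      qed
    next
      assume h: "\<forall>i<n. \<sigma> (p i, al i) = (c i, g i) \<and> \<sigma> (p (Suc i mod n), be i) = (c i, partner (g i))"
      show "\<forall>\<kappa>\<in>K. \<sigma> (x \<kappa>) = y g \<kappa>"
      proof
        fix \<kappa> assume "\<kappa> \<in> K"
        then obtain i t where k: "\<kappa> = (i, t)" "i < n" unfolding K_def by auto
        show "\<sigma> (x \<kappa>) = y g \<kappa>" using h k by (cases t) (auto simp: xF xT yF yT)
      qed
    qed
    then show ?thesis unfolding P_def by simp
  qed
  have eq: "{\<sigma> \<in> configurations n q. goodw \<sigma> n (p,c,al,be)} = (\<Union>g\<in>G. P g)"
  proof (intro set_eqI iffI)
    fix \<sigma> assume s: "\<sigma> \<in> {\<sigma> \<in> configurations n q. goodw \<sigma> n (p,c,al,be)}"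
    then have sB: "\<sigma> \<in> Bij HE HE" and gd: "goodw \<sigma> n (p,c,al,be)"
      unfolding configs_eq HE_def by auto
    define g where "g = restrict (\<lambda>i. snd (\<sigma> (p i, al i))) {..<n}"
    have inHE: "\<sigma> (p i, al i) \<in> HE" if "i < n" for i
    proof -
      have "(p i, al i) \<in> HE" using Pm_D(2)[OF pP that] alv[OF that] unfolding HE_def half_edges_def by auto
      then show ?thesis using sB unfolding Bij_def by auto
    qed
    have gG: "g \<in> G" unfolding G_def g_def using inHE unfolding HE_def half_edges_def by (auto simp: mem_Times_iff)
    have "\<sigma> \<in> P g" unfolding PK
    proof (intro conjI allI impI sB)
      fix i assume i: "i < n"
      have f1: "fst (\<sigma> (p i, al i)) = c i" and f2: "fst (\<sigma> (p (Suc i mod n), be i)) = c i"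
        and d: "designated_pair (snd (\<sigma> (p i, al i))) (snd (\<sigma> (p (Suc i mod n), be i)))"
        using gd i unfolding goodw_def by auto
      show "\<sigma> (p i, al i) = (c i, g i)" using f1 i unfolding g_def by (simp add: prod_eq_iff)
      show "\<sigma> (p (Suc i mod n), be i) = (c i, partner (g i))"
        using f2 d i unfolding g_def desig_iff by (simp add: prod_eq_iff)
    qed
    then show "\<sigma> \<in> (\<Union>g\<in>G. P g)" using gG by auto
  next
    fix \<sigma> assume "\<sigma> \<in> (\<Union>g\<in>G. P g)"
    then obtain g where gG: "g \<in> G" and sP: "\<sigma> \<in> P g" by auto
    have sB: "\<sigma> \<in> Bij HE HE" and h: "\<forall>i<n. \<sigma> (p i, al i) = (c i, g i) \<and> \<sigma> (p (Suc i mod n), be i) = (c i, partner (g i))"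
      using sP unfolding PK by auto
    have "goodw \<sigma> n (p,c,al,be)" unfolding goodw_def using h by (auto simp: desig_iff)
    then show "\<sigma> \<in> {\<sigma> \<in> configurations n q. goodw \<sigma> n (p,c,al,be)}"
      using sB unfolding configs_eq HE_def by auto
  qed
  have disj: "\<forall>g\<in>G. \<forall>g'\<in>G. g \<noteq> g' \<longrightarrow> P g \<inter> P g' = {}"
  proof (intro ballI impI)
    fix g g' assume g: "g \<in> G" and g': "g' \<in> G" and ne: "g \<noteq> g'"
    show "P g \<inter> P g' = {}"
    proof (rule ccontr)
      assume "P g \<inter> P g' \<noteq> {}"
      then obtain \<sigma> where "\<sigma> \<in> P g" "\<sigma> \<in> P g'" by auto
      then have "\<forall>i<n. g i = g' i" unfolding PK by auto
      then have "g = g'" using g g' unfolding G_def by (intro extensionalityI[of _ "{..<n}"]) (auto simp: PiE_iff)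
      then show False using ne by simp
    qed
  qed
  have cardP: "card (P g) = fact (n*(2*q) - n*2)" if gG: "g \<in> G" for g
  proof -
    have gv: "g i < 2*q" if "i < n" for i using gG that unfolding G_def by (auto simp: PiE_iff)
    have pinj: "inj_on p {..<n}" and cinj: "inj_on c {..<n}" using Pm_D(1) pP cP by auto
    have "card (P g) = fact (card HE - card K)"
      unfolding P_def
    proof (rule card_constrained_idx)
      show "finite HE" unfolding HE_def by (rule finite_HE)
      show "finite K" unfolding K_def by simp
      show "inj_on x K"
      proof (rule inj_onI)
        fix u v assume u: "u \<in> K" and v: "v \<in> K" and e: "x u = x v"
        obtain i t where ud: "u = (i,t)" and i: "i < n" using u unfolding K_def by auto
        obtain j s where vd: "v = (j,s)" and j: "j < n" using v unfolding K_def by auto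
        have si: "Suc i mod n < n" and sj: "Suc j mod n < n" using i j by auto
        show "u = v"
        proof (cases t; cases s)
          assume "t" "s"
          then have "p (Suc i mod n) = p (Suc j mod n)" "be i = be j" using e ud vd \<open>t\<close> \<open>s\<close> by (auto simp: xT)
          then have "Suc i mod n = Suc j mod n" using pinj si sj by (auto dest: inj_onD)
          then have "i = j" using Suc_mod_inj i j by blast
          then show ?thesis using ud vd \<open>t\<close> \<open>s\<close> by simp
        next
          assume "t" "\<not> s"
          then have "p (Suc i mod n) = p j" "be i = al j" using e ud vd \<open>t\<close> \<open>\<not> s\<close> by (auto simp: xT xF)
          then have "Suc i mod n = j" using pinj si j by (auto dest: inj_onD)
          then show ?thesis using \<open>be i = al j\<close> bev(2)[OF i] by simp
        next
          assume "\<not> t" "s"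
          then have "p i = p (Suc j mod n)" "al i = be j" using e ud vd \<open>\<not> t\<close> \<open>s\<close> by (auto simp: xT xF)
          then have "i = Suc j mod n" using pinj i sj by (auto dest: inj_onD)
          then show ?thesis using \<open>al i = be j\<close> bev(2)[OF j] by simp
        next
          assume "\<not> t" "\<not> s"
          then have "p i = p j" using e ud vd \<open>\<not> t\<close> \<open>\<not> s\<close> by (auto simp: xF)
          then have "i = j" using pinj i j by (auto dest: inj_onD)
          then show ?thesis using ud vd \<open>\<not> t\<close> \<open>\<not> s\<close> by simp
        qed
      qed
      show "x ` K \<subseteq> HE"
      proof
        fix z assume "z \<in> x ` K"
        then obtain i t where z: "z = x (i,t)" and i: "i < n" unfolding K_def by auto
        have si: "Suc i mod n < n" using i by simp
        show "z \<in> HE" using Pm_D(2)[OF pP i] Pm_D(2)[OF pP si] alv[OF i] bev(1)[OF i] z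
          unfolding HE_def half_edges_def by (cases t) (auto simp: xF xT)
      qed
      show "inj_on (y g) K"
      proof (rule inj_onI)
        fix u v assume u: "u \<in> K" and v: "v \<in> K" and e: "y g u = y g v"
        obtain i t where ud: "u = (i,t)" and i: "i < n" using u unfolding K_def by auto
        obtain j s where vd: "v = (j,s)" and j: "j < n" using v unfolding K_def by auto
        have "c i = c j" using e unfolding ud vd y_def by (auto split: if_splits)
        then have ij: "i = j" using cinj i j by (auto dest: inj_onD)
        show "u = v"
        proof (cases "t = s")
          case True then show ?thesis using ud vd ij by simp
        next
          case False
          then have "g i = partner (g i) \<or> partner (g i) = g i" using e unfolding ud vd y_def ij
            by (cases t) auto
          then show ?thesis using partner_ne by metis
        qed
      qed
      show "y g ` K \<subseteq> HE"
      proof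
        fix z assume "z \<in> y g ` K"
        then obtain i t where z: "z = y g (i,t)" and i: "i < n" unfolding K_def by auto
        show "z \<in> HE" using Pm_D(2)[OF cP i] gv[OF i] partner_lt[OF gv[OF i]] z
          unfolding HE_def half_edges_def by (cases t) (auto simp: yF yT)
      qed
    qed
    also have "card HE = n * (2*q)" unfolding HE_def by (rule card_HE)
    also have "card K = n * 2" unfolding K_def by (simp add: card_cartesian_product)
    finally show ?thesis .
  qed
  have finG: "finite G" unfolding G_def by (simp add: finite_PiE)
  have finP: "\<forall>g\<in>G. finite (P g)"
    unfolding P_def using finite_Bij[OF finite_HE finite_HE] unfolding HE_def by auto
  have "card {\<sigma> \<in> configurations n q. goodw \<sigma> n (p,c,al,be)} = (\<Sum>g\<in>G. card (P g))"
    unfolding eq by (rule card_UN_disjoint[OF finG finP disj])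
  also have "\<dots> = card G * fact (n*(2*q) - n*2)" using cardP by simp
  also have "card G = (2*q)^n" unfolding G_def by (simp add: card_PiE)
  finally show ?thesis .
qed

lemma sum_card_swap:
  assumes "finite A" "finite B"
  shows "(\<Sum>a\<in>A. card {b\<in>B. P a b}) = (\<Sum>b\<in>B. card {a\<in>A. P a b})"
proof -
  have e1: "card {b\<in>B. P a b} = (\<Sum>b\<in>B. if P a b then 1 else 0)" for a
    using assms(2) by (simp add: sum.inter_filter[symmetric])
  have e2: "card {a\<in>A. P a b} = (\<Sum>a\<in>A. if P a b then 1 else 0)" for b
    using assms(1) by (simp add: sum.inter_filter[symmetric])
  show ?thesis unfolding e1 e2 by (rule sum.swap)
qed

lemma card_W0: "card (W0 n q) = fact n * (fact n * ((2*q)^n * (2*q - 1)^n))"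
proof -
  let ?G = "{..<n} \<rightarrow>\<^sub>E {..<2*q}"
  let ?B = "\<lambda>al. (\<Pi>\<^sub>E i\<in>{..<n}. {..<2*q} - {al (Suc i mod n)})"
  have eq: "W0 n q = Pm n \<times> (Pm n \<times> (SIGMA al:?G. ?B al))"
    unfolding W0_def by auto
  have cB: "card (?B al) = (2*q - 1)^n" if "al \<in> ?G" for al
  proof -
    have "card (?B al) = (\<Prod>i\<in>{..<n}. card ({..<2*q} - {al (Suc i mod n)}))"
      by (simp add: card_PiE)
    also have "\<dots> = (\<Prod>i\<in>{..<n}. 2*q - 1)"
    proof (rule prod.cong[OF refl])
      fix i assume "i \<in> {..<n}"
      then have "al (Suc i mod n) \<in> {..<2*q}" using that by (auto simp: PiE_iff)
      then show "card ({..<2*q} - {al (Suc i mod n)}) = 2*q - 1" by (simp add: card_Diff_singleton)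
    qed
    finally show ?thesis by simp
  qed
  have "card (SIGMA al:?G. ?B al) = (\<Sum>al\<in>?G. card (?B al))"
    by (rule card_SigmaI) (auto simp: finite_PiE)
  also have "\<dots> = (\<Sum>al\<in>?G. (2*q - 1)^n)" using cB by simp
  also have "\<dots> = (2*q)^n * (2*q - 1)^n" by (simp add: card_PiE)
  finally have cS: "card (SIGMA al:?G. ?B al) = (2*q)^n * (2*q - 1)^n" .
  have cP: "card (Pm n) = fact n" unfolding Pm_def by (subst card_Bij) auto
  show ?thesis unfolding eq card_cartesian_product cS cP ..
qed

lemma card_configs: "card (configurations n q) = fact (n * (2*q))"
  unfolding configs_eq by (simp add: card_Bij finite_HE card_HE)

lemma sum_Wit:
  "(\<Sum>\<sigma>\<in>configurations n q. card (Wit n q \<sigma>))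
     = card (W0 n q) * ((2*q)^n * fact (n*(2*q) - n*2))"
proof -
  have fc: "finite (configurations n q)" unfolding configs_eq by (intro finite_Bij finite_HE)
  have "(\<Sum>\<sigma>\<in>configurations n q. card (Wit n q \<sigma>))
      = (\<Sum>\<sigma>\<in>configurations n q. card {w \<in> W0 n q. goodw \<sigma> n w})"
    unfolding Wit_def ..
  also have "\<dots> = (\<Sum>w\<in>W0 n q. card {\<sigma> \<in> configurations n q. goodw \<sigma> n w})"
    by (rule sum_card_swap[OF fc finite_W0])
  also have "\<dots> = (\<Sum>w\<in>W0 n q. (2*q)^n * fact (n*(2*q) - n*2))"
  proof (rule sum.cong[OF refl])
    fix w assume "w \<in> W0 n q"
    moreover obtain p c al be where "w = (p,c,al,be)" by (cases w) auto
    ultimately show "card {\<sigma> \<in> configurations n q. goodw \<sigma> n w} = (2*q)^n * fact (n*(2*q) - n*2)"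
      using count_good by simp
  qed
  also have "\<dots> = card (W0 n q) * ((2*q)^n * fact (n*(2*q) - n*2))" by simp
  finally show ?thesis .
qed

lemma EY_bounds:
  assumes q: "q \<ge> 1" and n: "n \<ge> 1"
  shows "real (fact n ^ 2 * (2*q)^n * (2*q-1)^n * (2*q)^n * fact (2*q*n - 2*n)) / (2 * real n * fact (2*q*n)) \<le> EY n q
       \<and> EY n q \<le> real (fact n ^ 2 * (2*q)^n * (2*q-1)^n * (2*q)^n * fact (2*q*n - 2*n)) / (real n * fact (2*q*n))"
proof -
  let ?C = "configurations n q"
  define T where "T = (\<Sum>\<sigma>\<in>?C. card (Wit n q \<sigma>))"
  define S where "S = (\<Sum>\<sigma>\<in>?C. Y n q \<sigma>)"
  have n0: "n > 0" using n by simp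
  have e1: "n*(2*q) = 2*q*n" and e2: "n*2 = 2*n" by simp_all
  have TT: "fact n ^ 2 * (2*q)^n * (2*q-1)^n * (2*q)^n * fact (2*q*n - 2*n) = T"
    unfolding T_def sum_Wit card_W0 e1 e2 by (simp add: power2_eq_square mult_ac)
  have lo: "n * S \<le> T"
  proof -
    have "n * S = (\<Sum>\<sigma>\<in>?C. n * Y n q \<sigma>)" unfolding S_def by (simp add: sum_distrib_left)
    also have "\<dots> \<le> T" unfolding T_def by (rule sum_mono) (use Y_bounds[OF n0] in auto)
    finally show ?thesis .
  qed
  have hi: "T \<le> 2 * n * S"
  proof -
    have "T \<le> (\<Sum>\<sigma>\<in>?C. 2 * n * Y n q \<sigma>)" unfolding T_def by (rule sum_mono) (use Y_bounds[OF n0] in auto)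
    also have "\<dots> = 2 * n * S" unfolding S_def by (simp add: sum_distrib_left)
    finally show ?thesis .
  qed
  have EY: "EY n q = real S / fact (2*q*n)"
    unfolding EY_def S_def card_configs e1 by simp
  define F :: real where "F = fact (2*q*n)"
  have F: "F > 0" unfolding F_def by simp
  have N: "real n > 0" using n by simp
  have lo': "real n * real S \<le> real T" using lo by (metis of_nat_le_iff of_nat_mult)
  have hi': "real T \<le> 2 * real n * real S" using hi by (metis of_nat_le_iff of_nat_mult of_nat_numeral)
  have A: "real T / (2 * real n * F) \<le> real S / F"
  proof -
    have "real T / (2 * real n) \<le> real S" using hi' N by (simp add: divide_le_eq mult.commute)
    then have "real T / (2 * real n) / F \<le> real S / F" using F by (intro divide_right_mono) auto
    then show ?thesis by (simp add: divide_divide_eq_left mult.commute)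
  qed
  have B: "real S / F \<le> real T / (real n * F)"
  proof -
    have "real S \<le> real T / real n" using lo' N by (simp add: le_divide_eq mult.commute)
    then have "real S / F \<le> real T / real n / F" using F by (intro divide_right_mono) auto
    then show ?thesis by (simp add: divide_divide_eq_left mult.commute)
  qed
  show ?thesis unfolding TT EY using A B unfolding F_def by simp
qed


lemma EY_two_sided:
  fixes q :: nat and d r :: real
  assumes q: "q \<ge> 2" and d: "d = real (2 * q)"
    and r: "r = (d - 1) * (d - 2) ^ (2 * q - 2) / d ^ (2 * q - 2)"
  shows "\<exists>c1 c2. c1 > 0 \<and> c2 > 0 \<and> (\<forall>n\<ge>1. c1 * r^n \<le> EY n q \<and> EY n q \<le> c2 * r^n)"
proof -
  define k where "k = 2*q - 2"
  have k1: "k \<ge> 1" and rk: "real k > 0" using q by (auto simp: k_def)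
  have dk: "d = real k + 2" using q d by (simp add: k_def)
  have rr: "r = (real k + 1) * real k ^ k / (real k + 2)^k"
    unfolding r dk by (simp add: k_def)
  define c where "c = sqrt (real k/(real k+2))"
  have c: "c > 0" using rk by (simp add: c_def)
  have main: "c * exp (1/2) * r^n / 2 \<le> EY n q \<and> EY n q \<le> c * exp (5/2) * r^n" if n: "n \<ge> 1" for n
  proof -
    have kn: "k*n \<ge> 1" and k2n: "(k+2)*n \<ge> 1" using k1 n by auto
    let ?T = "fact n ^ 2 * (2*q)^n * (2*q-1)^n * (2*q)^n * fact (2*q*n - 2*n)"
    have e1: "2*q*n - 2*n = k*n" by (simp add: k_def diff_mult_distrib)
    have kq: "k + 2 = 2*q" using q by (simp add: k_def)
    have e2: "2*q*n = (k+2)*n" unfolding kq ..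
    have e3: "real (2*q) = real k + 2" and e4: "real (2*q-1) = real k + 1" using q by (auto simp: k_def)
    have T: "real ?T / (real n * fact (2*q*n)) = 
      (fact n)^2 * ((real k + 2)*(real k + 1))^n * (real k + 2)^n * fact (k*n) / (real n * fact ((k+2)*n))"
      unfolding e1 e2 unfolding of_nat_mult unfolding of_nat_power e3 e4 of_nat_fact
      by (simp add: power_mult_distrib mult.assoc)
    define s where "s = 2 * sti n + sti (k*n) - sti ((k+2)*n)"
    have sb: "1/2 \<le> s \<and> s \<le> 5/2" using sti_bounds[OF n] sti_bounds[OF kn] sti_bounds[OF k2n]
      unfolding s_def by auto
    have F: "real ?T / (real n * fact (2*q*n)) = exp s * c * r^n"
      unfolding T F_formula[OF k1 n] s_def c_def rr ..
    have rpos: "r^n \<ge> 0" unfolding rr using rk by simp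
    have m1: "exp (1/2) * c * r^n \<le> exp s * c * r^n"
      using sb c rpos by (intro mult_right_mono) auto
    have m2: "exp s * c * r^n \<le> exp (5/2) * c * r^n"
      using sb c rpos by (intro mult_right_mono) auto
    have EB: "real ?T / (2 * real n * fact (2*q*n)) \<le> EY n q" "EY n q \<le> real ?T / (real n * fact (2*q*n))"
      using EY_bounds[of q n] q n by auto
    have h0: "\<And>(a::real) b. a / (2 * b) = a / b / 2" by simp
    have h: "real ?T / (2 * real n * fact (2*q*n)) = (real ?T / (real n * fact (2*q*n))) / 2"
      using h0[of "real ?T" "real n * fact (2*q*n)"] by (simp only: mult.assoc)
    have lo: "c * exp (1/2) * r^n / 2 \<le> EY n q"
    proof -
      have "c * exp (1/2) * r^n / 2 = (exp (1/2) * c * r^n) / 2" by (simp add: mult_ac)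
      also have "\<dots> \<le> (exp s * c * r^n) / 2" using m1 by simp
      also have "\<dots> = real ?T / (2 * real n * fact (2*q*n))" unfolding h F ..
      also have "\<dots> \<le> EY n q" by (rule EB(1))
      finally show ?thesis .
    qed
    have hi: "EY n q \<le> c * exp (5/2) * r^n"
    proof -
      have "EY n q \<le> exp s * c * r^n" using EB(2) unfolding F .
      also have "\<dots> \<le> exp (5/2) * c * r^n" by (rule m2)
      also have "\<dots> = c * exp (5/2) * r^n" by (simp add: mult_ac)
      finally show ?thesis .
    qed
    show ?thesis using lo hi by simp
  qed
  show ?thesis
    by (rule exI[of _ "c * exp (1/2) / 2"], rule exI[of _ "c * exp (5/2)"]) (use c main in auto)
qed

lemma r_gt1:
  fixes k :: nat assumes k: "k \<ge> 6" "even k"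
  shows "(real k + 1) * real k ^ k / (real k + 2)^k > 1"
proof -
  have rk: "real k > 0" using k by simp
  have key: "((real k + 2) / real k)^k < real k + 1"
  proof (cases "k = 6")
    case True
    have "(4/3::real)^6 = 4096/729" by (simp add: power_divide)
    then show ?thesis using True by simp
  next
    case False
    then have k8: "k \<ge> 8" using k by presburger
    have "(real k + 2) / real k = 1 + 2 / real k" using rk by (simp add: field_simps)
    also have "\<dots> \<le> exp (2 / real k)" by (rule exp_ge_add_one_self)
    finally have "((real k + 2) / real k)^k \<le> exp (2 / real k) ^ k"
      using rk by (intro power_mono) auto
    also have "\<dots> = exp (real k * (2 / real k))" by (rule exp_of_nat_mult[symmetric])
    also have "\<dots> = exp 1 * exp 1" using rk by (simp add: exp_add[symmetric])
    also have "\<dots> < 2.72 * 2.72" using e_less_272 by (intro mult_strict_mono) auto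
    also have "\<dots> < real k + 1" using k8 by simp
    finally show ?thesis .
  qed
  have "(real k + 1) * real k ^ k / (real k + 2)^k = (real k + 1) / (((real k + 2) / real k)^k)"
    using rk by (simp add: power_divide)
  also have "\<dots> > 1" using key rk by (subst less_divide_eq) auto
  finally show ?thesis .
qed

theorem lemma3p2:
  fixes q :: nat and d r :: real
  assumes "q \<ge> 2"
    and "d = real (2 * q)"
    and "r = (d - 1) * (d - 2) ^ (2 * q - 2) / d ^ (2 * q - 2)"
  shows "(\<lambda>n. EY n q) \<in> \<Theta>(\<lambda>n. r ^ n)
         \<and> (q \<le> 3 \<longrightarrow> (\<lambda>n. EY n q) \<longlonglongrightarrow> 0)
         \<and> (q \<ge> 4 \<longrightarrow> filterlim (\<lambda>n. EY n q) at_top sequentially)"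
proof -
  obtain c1 c2 where c: "c1 > 0" "c2 > 0" and b: "\<And>n. n \<ge> 1 \<Longrightarrow> c1 * r^n \<le> EY n q \<and> EY n q \<le> c2 * r^n"
    using EY_two_sided[OF assms] by blast
  have d4: "d \<ge> 4" using assms(1,2) by simp
  have rpos: "r > 0" unfolding assms(3) using d4 by simp
  have ev: "eventually (\<lambda>n. c1 * norm (r^n) \<le> norm (EY n q) \<and> norm (EY n q) \<le> c2 * norm (r^n)) sequentially"
  proof (rule eventually_sequentiallyI[of 1])
    fix n :: nat assume n: "n \<ge> 1"
    have "c1 * r^n > 0" using c rpos by simp
    then show "c1 * norm (r^n) \<le> norm (EY n q) \<and> norm (EY n q) \<le> c2 * norm (r^n)"
      using b[OF n] rpos by auto
  qed
  have T: "(\<lambda>n. EY n q) \<in> \<Theta>(\<lambda>n. r ^ n)" by (rule bigthetaI'[OF c ev])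
  have L1: "(\<lambda>n. EY n q) \<longlonglongrightarrow> 0" if q3: "q \<le> 3"
  proof -
    have "r < 1"
    proof -
      have "q = 2 \<or> q = 3" using q3 assms(1) by auto
      then show ?thesis
      proof
        assume q2: "q = 2"
        have "d = 4" using assms(2) q2 by simp
        then show ?thesis unfolding assms(3) q2 by simp
      next
        assume q3: "q = 3"
        have "d = 6" using assms(2) q3 by simp
        then show ?thesis unfolding assms(3) q3 by simp
      qed
    qed
    then have "(\<lambda>n. r^n) \<longlonglongrightarrow> 0" using rpos by (intro LIMSEQ_power_zero) simp
    then have "(\<lambda>n. c2 * r^n) \<longlonglongrightarrow> c2 * 0" by (rule tendsto_mult[OF tendsto_const])
    then have lim: "(\<lambda>n. c2 * r^n) \<longlonglongrightarrow> 0" by simp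
    have ev1: "eventually (\<lambda>n. 0 \<le> EY n q) sequentially"
    proof (rule eventually_sequentiallyI[of 1])
      fix n :: nat assume n: "n \<ge> 1"
      have "0 < c1 * r^n" using c rpos by simp
      then show "0 \<le> EY n q" using b[OF n] by linarith
    qed
    have ev2: "eventually (\<lambda>n. EY n q \<le> c2 * r^n) sequentially"
      using b by (intro eventually_sequentiallyI[of 1]) auto
    show ?thesis by (rule tendsto_sandwich[OF ev1 ev2 tendsto_const lim])
  qed
  have L2: "filterlim (\<lambda>n. EY n q) at_top sequentially" if q4: "q \<ge> 4"
  proof -
    define k where "k = 2*q - 2"
    have k: "k \<ge> 6" "even k" using q4 by (auto simp: k_def)
    have dk: "d = real k + 2" using assms(2) q4 by (simp add: k_def)
    have rr: "r = (real k + 1) * real k ^ k / (real k + 2)^k"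
      unfolding assms(3) dk by (simp add: k_def)
    have r1: "r > 1" unfolding rr by (rule r_gt1[OF k])
    have "filterlim (\<lambda>n. c1 * r^n) at_top sequentially"
    proof (rule filterlim_at_top_gt[where c=0, THEN iffD2], intro allI impI)
      fix Z :: real assume "Z > 0"
      obtain N where N: "Z / c1 < r ^ N" using real_arch_pow[OF r1] by blast
      show "eventually (\<lambda>n. Z \<le> c1 * r^n) sequentially"
      proof (rule eventually_sequentiallyI[of N])
        fix n assume "N \<le> n"
        then have "r^N \<le> r^n" using r1 by (intro power_increasing) auto
        then have "Z / c1 \<le> r^n" using N by simp
        then show "Z \<le> c1 * r^n" using c by (simp add: divide_le_eq mult.commute)
      qed
    qed
    moreover have "eventually (\<lambda>n. c1 * r^n \<le> EY n q) sequentially"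
      using b by (intro eventually_sequentiallyI[of 1]) auto
    ultimately show ?thesis by (rule filterlim_at_top_mono)
  qed
  show ?thesis using T L1 L2 by blast
qed

end
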